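(* Let $\mathcal{H}_A,\mathcal{H}_1,\mathcal{H}_2$ be finite-dimensional Hilbert spaces and let $\rho$ be a density operator on $\mathcal{H}_A\otimes\mathcal{H}_1\otimes\mathcal{H}_2$. For $k=1,2$ let $\Lambda^{(k)}$ be a positive and trace-preserving linear map on the operators on $\mathcal{H}_k$ (not necessarily completely positive). Let $\{\{M_{a|x}\}_a\}_x$ be a finite collection of POVMs on $\mathcal{H}_A$. Consider the operator $\tilde\rho=(\mathrm{id}_A\otimes\Lambda^{(1)}\otimes\Lambda^{(2)})[\rho]$ and the assemblage with elements $\sigma^{(k)}_{a|x}=\mathrm{tr}_{\mathcal{H}_A,\mathcal{H}_{\neg k}}[(M_{a|x}\otimes\mathbb{I}_1\otimes\mathbb{I}_2)\tilde\rho]$, where $\mathcal{H}_{\neg k}$ denotes the Bob space other than $\mathcal{H}_k$. Then for any finite collections of POVMs $\{\{N^{(1)}_{b_1|y_1}\}_{b_1}\}_{y_1}$ on $\mathcal{H}_1$ and $\{\{N^{(2)}_{b_2|y_2}\}_{b_2}\}_{y_2}$ on $\mathcal{H}_2$, the correlations $$p(a b_1 b_2|x y_1 y_2)=\mathrm{tr}\big[(M_{a|x}\otimes N^{(1)}_{b_1|y_1}\otimes N^{(2)}_{b_2|y_2})\,\tilde\rho\big]$$ admit a quantum realisation.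
   Context: A tripartite conditional distribution $p(a b_1 b_2|x y_1 y_2)$ admits a quantum realisation if there exist Hilbert spaces $\mathcal{K}_A,\mathcal{K}_1,\mathcal{K}_2$, a density operator $\omega$ on $\mathcal{K}_A\otimes\mathcal{K}_1\otimes\mathcal{K}_2$, and POVMs $\{E_{a|x}\}$, $\{F_{b_1|y_1}\}$, $\{G_{b_2|y_2}\}$ on the respective spaces with $p(ab_1b_2|xy_1y_2)=\mathrm{tr}[(E_{a|x}\otimes F_{b_1|y_1}\otimes G_{b_2|y_2})\omega]$. (In the paper, $\tilde\rho$ is interpreted as a state of the toy theory "Witworld", in which states are operators that are positive on product effects, and the correlations above are those obtained when the parties measure such a state.) *)

theory Defs
  imports Complex_Main "Jordan_Normal_Form.Matrix"
begin

definition mtrace :: "complex mat \<Rightarrow> complex" where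
  "mtrace A = (\<Sum>i<dim_row A. A $$ (i, i))"

definition kron :: "complex mat \<Rightarrow> complex mat \<Rightarrow> complex mat" where
  "kron A B = mat (dim_row A * dim_row B) (dim_col A * dim_col B)
     (\<lambda>(i, j). A $$ (i div dim_row B, j div dim_col B) * B $$ (i mod dim_row B, j mod dim_col B))"

definition munit :: "nat \<Rightarrow> nat \<Rightarrow> nat \<Rightarrow> complex mat" where
  "munit d i j = mat d d (\<lambda>(k, l). if k = i \<and> l = j then 1 else 0)"

definition psd :: "nat \<Rightarrow> complex mat \<Rightarrow> bool" where
  "psd d A \<longleftrightarrow> A \<in> carrier_mat d d \<and>
     (\<forall>v :: nat \<Rightarrow> complex.
        let q = (\<Sum>i<d. \<Sum>j<d. cnj (v i) * A $$ (i, j) * v j) in Im q = 0 \<and> Re q \<ge> 0)"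

definition density_op :: "nat \<Rightarrow> complex mat \<Rightarrow> bool" where
  "density_op d \<rho> \<longleftrightarrow> psd d \<rho> \<and> mtrace \<rho> = 1"

definition povm :: "nat \<Rightarrow> ('a::finite \<Rightarrow> complex mat) \<Rightarrow> bool" where
  "povm d E \<longleftrightarrow> (\<forall>a. psd d (E a)) \<and>
     (\<forall>i<d. \<forall>j<d. (\<Sum>a\<in>UNIV. E a $$ (i, j)) = (if i = j then 1 else 0))"

definition linear_map_on :: "nat \<Rightarrow> (complex mat \<Rightarrow> complex mat) \<Rightarrow> bool" where
  "linear_map_on d L \<longleftrightarrow>
     (\<forall>A \<in> carrier_mat d d. L A \<in> carrier_mat d d) \<and>
     (\<forall>A \<in> carrier_mat d d. \<forall>B \<in> carrier_mat d d. L (A + B) = L A + L B) \<and>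
     (\<forall>c. \<forall>A \<in> carrier_mat d d. L (c \<cdot>\<^sub>m A) = c \<cdot>\<^sub>m L A)"

definition positive_map :: "nat \<Rightarrow> (complex mat \<Rightarrow> complex mat) \<Rightarrow> bool" where
  "positive_map d L \<longleftrightarrow> (\<forall>A. psd d A \<longrightarrow> psd d (L A))"

definition trace_preserving :: "nat \<Rightarrow> (complex mat \<Rightarrow> complex mat) \<Rightarrow> bool" where
  "trace_preserving d L \<longleftrightarrow> (\<forall>A \<in> carrier_mat d d. mtrace (L A) = mtrace A)"

text \<open>(id_A (x) L1 (x) L2)[rho] on C^dA \<otimes> C^d1 \<otimes> C^d2 (index order A,1,2,
  i.e. matrix index iA*(d1*d2) + i1*d2 + i2), defined as the linear extension
  from product matrix units.\<close>
definition apply_id_maps ::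
  "nat \<Rightarrow> nat \<Rightarrow> nat \<Rightarrow> (complex mat \<Rightarrow> complex mat) \<Rightarrow> (complex mat \<Rightarrow> complex mat)
     \<Rightarrow> complex mat \<Rightarrow> complex mat" where
  "apply_id_maps dA d1 d2 L1 L2 \<rho> =
     mat (dA * d1 * d2) (dA * d1 * d2) (\<lambda>(r, s).
       \<Sum>iA<dA. \<Sum>jA<dA. \<Sum>i1<d1. \<Sum>j1<d1. \<Sum>i2<d2. \<Sum>j2<d2.
         \<rho> $$ (iA * (d1 * d2) + i1 * d2 + i2, jA * (d1 * d2) + j1 * d2 + j2) *
         kron (kron (munit dA iA jA) (L1 (munit d1 i1 j1))) (L2 (munit d2 i2 j2)) $$ (r, s))"

definition quantum_realisable ::
  "('a::finite \<Rightarrow> 'b1::finite \<Rightarrow> 'b2::finite \<Rightarrow> 'x::finite \<Rightarrow> 'y1::finite \<Rightarrow> 'y2::finite \<Rightarrow> complex)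
     \<Rightarrow> bool" where
  "quantum_realisable p \<longleftrightarrow>
     (\<exists>nA n1 n2 \<omega> (E :: 'x \<Rightarrow> 'a \<Rightarrow> complex mat) (F :: 'y1 \<Rightarrow> 'b1 \<Rightarrow> complex mat)
          (G :: 'y2 \<Rightarrow> 'b2 \<Rightarrow> complex mat).
        density_op (nA * n1 * n2) \<omega> \<and>
        (\<forall>x. povm nA (E x)) \<and> (\<forall>y1. povm n1 (F y1)) \<and> (\<forall>y2. povm n2 (G y2)) \<and>
        (\<forall>a b1 b2 x y1 y2.
           p a b1 b2 x y1 y2 = mtrace (kron (kron (E x a) (F y1 b1)) (G y2 b2) * \<omega>)))"

end

theory Submission imports Defs begin
lemma sum_split: fixes a b :: nat and g :: "nat \<Rightarrow> 'c::comm_monoid_add"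
  shows "(\<Sum>r<a*b. g r) = (\<Sum>i<a. \<Sum>j<b. g (i*b+j))"
proof -
  have "(\<Sum>r<a*b. g r) = (\<Sum>i<a. sum g {i*b..<i*b+b})"
    using sum.nat_group[of g b a, symmetric] by (simp add: mult.commute)
  also have "\<dots> = (\<Sum>i<a. \<Sum>j<b. g (i*b+j))"
  proof (rule sum.cong[OF refl])
    fix i show "sum g {i*b..<i*b+b} = (\<Sum>j<b. g (i*b+j))"
      by (simp add: sum.atLeastLessThan_shift_0 atLeast0LessThan)
  qed
  finally show ?thesis .
qed

lemma sum_split3: fixes a b c :: nat and g :: "nat \<Rightarrow> 'c::comm_monoid_add"
  shows "(\<Sum>r<a*b*c. g r) = (\<Sum>i<a. \<Sum>j<b. \<Sum>k<c. g (i*(b*c)+j*c+k))"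
  by (simp add: mult.assoc sum_split[where a=a and b="b*c"] sum_split[where a=b and b=c] add.assoc)

lemma divmod_aux[simp]: "(j::nat) < m \<Longrightarrow> (i*m+j) div m = i" "(j::nat) < m \<Longrightarrow> (i*m+j) mod m = j"
  by auto

lemma mtrace_mult: "A \<in> carrier_mat n n \<Longrightarrow> B \<in> carrier_mat n n \<Longrightarrow>
  mtrace (A*B) = (\<Sum>i<n. \<Sum>j<n. A$$(i,j) * B$$(j,i))"
  by (simp add: mtrace_def scalar_prod_def atLeast0LessThan)

lemma kron_carrier: "A \<in> carrier_mat n n \<Longrightarrow> B \<in> carrier_mat m m \<Longrightarrow> kron A B \<in> carrier_mat (n*m) (n*m)"
  by (simp add: kron_def)

lemma kron_index: "A \<in> carrier_mat n n \<Longrightarrow> B \<in> carrier_mat m m \<Longrightarrow> i < n*m \<Longrightarrow> j < n*m \<Longrightarrow>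
   kron A B $$ (i,j) = A$$(i div m, j div m) * B$$(i mod m, j mod m)"
  by (simp add: kron_def)

lemma idx_less: "(i::nat) < n \<Longrightarrow> j < m \<Longrightarrow> i*m+j < n*m"
proof -
  assume a: "i < n" "j < m"
  have "i*m+j < i*m+m" using a by simp
  also have "\<dots> = (i+1)*m" by simp
  also have "\<dots> \<le> n*m" using a by (intro mult_right_mono) auto
  finally show ?thesis .
qed

lemma kron_index2: "A \<in> carrier_mat n n \<Longrightarrow> B \<in> carrier_mat m m \<Longrightarrow> i < n \<Longrightarrow> j < m \<Longrightarrow>
   k < n \<Longrightarrow> l < m \<Longrightarrow> kron A B $$ (i*m+j, k*m+l) = A$$(i,k) * B$$(j,l)"
  by (simp add: kron_index idx_less)

lemma trace_kron: assumes "A \<in> carrier_mat n n" "C \<in> carrier_mat n n" "B \<in> carrier_mat m m" "D \<in> carrier_mat m m"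
  shows "mtrace (kron A B * kron C D) = mtrace (A*C) * mtrace (B*D)"
proof -
  have "mtrace (kron A B * kron C D) = (\<Sum>r<n*m. \<Sum>s<n*m. kron A B $$ (r,s) * kron C D $$ (s,r))"
    using assms by (simp add: mtrace_mult kron_carrier)
  also have "\<dots> = (\<Sum>i<n. \<Sum>j<m. \<Sum>k<n. \<Sum>l<m. A$$(i,k) * B$$(j,l) * (C$$(k,i) * D$$(l,j)))"
    unfolding sum_split[where a=n and b=m] using assms by (simp add: kron_index2)
  also have "\<dots> = (\<Sum>i<n. \<Sum>j<m. \<Sum>k<n. \<Sum>l<m. (A$$(i,k) * C$$(k,i)) * (B$$(j,l) * D$$(l,j)))"
    by (simp add: mult_ac)
  also have "\<dots> = (\<Sum>i<n. \<Sum>k<n. \<Sum>j<m. \<Sum>l<m. (A$$(i,k) * C$$(k,i)) * (B$$(j,l) * D$$(l,j)))"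
    by (rule sum.cong[OF refl], rule sum.swap)
  also have "\<dots> = mtrace (A*C) * mtrace (B*D)"
    unfolding mtrace_mult[OF assms(1,2)] mtrace_mult[OF assms(3,4)]
    by (simp only: sum_distrib_right, simp only: sum_distrib_left)
  finally show ?thesis .
qed

definition qf :: "nat \<Rightarrow> complex mat \<Rightarrow> (nat \<Rightarrow> complex) \<Rightarrow> complex" where
  "qf d A v = (\<Sum>i<d. \<Sum>j<d. cnj (v i) * A $$ (i, j) * v j)"

lemma psd_iff: "psd d A \<longleftrightarrow> A \<in> carrier_mat d d \<and> (\<forall>v. Im (qf d A v) = 0 \<and> Re (qf d A v) \<ge> 0)"
  unfolding psd_def qf_def Let_def by simp

lemma qf_alt: "qf d A v = (\<Sum>i<d. cnj (v i) * (\<Sum>j<d. A $$ (i, j) * v j))"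
  unfolding qf_def by (simp add: sum_distrib_left mult.assoc)

lemma qf_alt2: "qf d A v = (\<Sum>i<d. (\<Sum>j<d. A $$ (i, j) * v j) * cnj (v i))"
  unfolding qf_def sum_distrib_right by (simp add: mult_ac)

lemma sum_two: assumes "i < (d::nat)" "j < d" "i \<noteq> j"
  shows "(\<Sum>b<d. f b * (if b = i then x else if b = j then y else 0)) = f i * x + f j * (y::complex)"
proof -
  have eq: "\<And>b. f b * (if b = i then x else if b = j then y else 0) = (if b = i then f b * x else 0) + (if b = j then f b * y else 0)"
    using assms by auto
  show ?thesis unfolding eq sum.distrib using assms by (simp add: sum.delta)
qed

lemma sum_one: assumes "i < (d::nat)"
  shows "(\<Sum>b<d. f b * (if b = i then x else 0)) = f i * (x::complex)"
proof -
  have eq: "\<And>b. f b * (if b = i then x else 0) = (if b = i then f b * x else 0)"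
    by auto
  show ?thesis unfolding eq using assms by (simp add: sum.delta)
qed

lemma qf_two: assumes "i < d" "j < d" "i \<noteq> j"
  shows "qf d A (\<lambda>k. if k = i then x else if k = j then y else 0) =
    cnj x * A$$(i,i) * x + cnj x * A$$(i,j) * y + cnj y * A$$(j,i) * x + cnj y * A$$(j,j) * y"
proof -
  have c: "\<And>k. cnj (if k = i then x else if k = j then y else 0) = (if k = i then cnj x else if k = j then cnj y else 0)"
    by auto
  show ?thesis unfolding qf_alt2 c
    by (simp only: sum_two[OF assms], simp add: algebra_simps)
qed

lemma qf_one: assumes "i < d"
  shows "qf d A (\<lambda>k. if k = i then x else 0) = cnj x * A$$(i,i) * x"
proof -
  have c: "\<And>k. cnj (if k = i then x else 0) = (if k = i then cnj x else 0)"
    by auto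
  show ?thesis unfolding qf_alt2 c
    by (simp only: sum_one[OF assms], simp add: algebra_simps)
qed

lemma psd_diag: assumes "psd d A" "i < d" shows "Im (A$$(i,i)) = 0" "Re (A$$(i,i)) \<ge> 0"
  using assms(1) qf_one[OF assms(2), of A 1] unfolding psd_iff by (metis complex_cnj_one mult_1 mult_1_right)+

lemma psd_herm: assumes "psd d A" "i < d" "j < d" shows "A$$(j,i) = cnj (A$$(i,j))"
proof (cases "i = j")
  case True
  then show ?thesis using psd_diag[OF assms(1,2)] by (simp add: complex_eq_iff)
next
  case False
  have q1: "Im (qf d A (\<lambda>k. if k = i then 1 else if k = j then 1 else 0)) = 0"
    using assms(1) unfolding psd_iff by blast
  have q2: "Im (qf d A (\<lambda>k. if k = i then 1 else if k = j then \<i> else 0)) = 0"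
    using assms(1) unfolding psd_iff by blast
  have di: "Im (A$$(i,i)) = 0" and dj: "Im (A$$(j,j)) = 0" using psd_diag assms by auto
  from q1 have "Im (A$$(i,j)) + Im (A$$(j,i)) = 0"
    unfolding qf_two[OF assms(2,3) False] using di dj by simp
  moreover from q2 have "Re (A$$(i,j)) - Re (A$$(j,i)) = 0"
    unfolding qf_two[OF assms(2,3) False] using di dj by simp
  ultimately show ?thesis by (simp add: complex_eq_iff)
qed


lemma psd_zero_row: assumes A: "psd d A" and m: "m < d" and z: "A$$(m,m) = 0" and j: "j < d"
  shows "A$$(m,j) = 0"
proof (rule ccontr)
  define c where "c = A$$(m,j)"
  assume "A$$(m,j) \<noteq> 0"
  hence c0: "c \<noteq> 0" unfolding c_def .
  with z have jm: "m \<noteq> j" unfolding c_def by auto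
  define s where "s = (Re c)^2 + (Im c)^2"
  have s0: "s > 0" using c0 unfolding s_def by (simp add: complex_eq_iff sum_power2_gt_zero_iff)
  define t where "t = (Re (A$$(j,j)) + 1) / (2*s)"
  define x where "x = - c * complex_of_real t"
  have h: "A$$(j,m) = cnj c" using psd_herm[OF A m j] unfolding c_def .
  have "Re (qf d A (\<lambda>k. if k = m then x else if k = j then 1 else 0)) = Re (A$$(j,j)) - 2*t*s"
    unfolding qf_two[OF m j jm] h z c_def[symmetric] x_def s_def
    by (simp add: algebra_simps power2_eq_square)
  also have "\<dots> = -1" using s0 unfolding t_def by (simp add: field_simps)
  finally have "Re (qf d A (\<lambda>k. if k = m then x else if k = j then 1 else 0)) = -1" .
  moreover have "Re (qf d A (\<lambda>k. if k = m then x else if k = j then 1 else 0)) \<ge> 0"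
    using A unfolding psd_iff by blast
  ultimately show False by simp
qed

definition ptr :: "nat \<Rightarrow> complex mat \<Rightarrow> complex mat \<Rightarrow> complex" where
  "ptr d N Q = (\<Sum>i<d. \<Sum>j<d. N$$(i,j) * Q$$(j,i))"

lemma key_ind: "d - m = k \<Longrightarrow> psd d N \<Longrightarrow> psd d Q \<Longrightarrow> (\<forall>i<d. \<forall>j<d. (i < m \<or> j < m) \<longrightarrow> Q$$(i,j) = 0)
  \<Longrightarrow> Im (ptr d N Q) = 0 \<and> Re (ptr d N Q) \<ge> 0"
proof (induction k arbitrary: m Q)
  case 0
  then have "ptr d N Q = 0" unfolding ptr_def by simp
  then show ?case by simp
next
  case (Suc k m Q)
  have m: "m < d" and k: "d - Suc m = k" using Suc.prems(1) by auto
  note NN = Suc.prems(2) and QQ = Suc.prems(3) and zer = Suc.prems(4)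
  define a where "a = Q$$(m,m)"
  have aI: "Im a = 0" and aR: "Re a \<ge> 0" using psd_diag[OF QQ m] unfolding a_def by auto
  obtain r where ar: "a = complex_of_real r" using aI by (metis complex_eq_iff Im_complex_of_real Re_complex_of_real)
  show ?case
  proof (cases "a = 0")
    case True
    have r: "Q$$(m,j) = 0" if "j < d" for j using psd_zero_row[OF QQ m _ that] True unfolding a_def by simp
    have c: "Q$$(j,m) = 0" if "j < d" for j using psd_herm[OF QQ m that] r[OF that] by simp
    have "\<forall>i<d. \<forall>j<d. (i < Suc m \<or> j < Suc m) \<longrightarrow> Q$$(i,j) = 0"
      using zer r c by (metis less_Suc_eq)
    then show ?thesis using Suc.IH[OF k NN QQ] by blast
  next
    case False
    have aR': "Re a > 0" using False aI aR by (simp add: complex_eq_iff)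
    have aof: "a = complex_of_real (Re a)" using aI by (simp add: complex_eq_iff)
    define Q' where "Q' = mat d d (\<lambda>(i,j). Q$$(i,j) - Q$$(i,m) * Q$$(m,j) / a)"
    have Qc: "Q \<in> carrier_mat d d" using QQ unfolding psd_iff by blast
    have qfeq: "qf d Q' v = qf d Q (\<lambda>i. v i - (if i = m then (\<Sum>j<d. Q$$(m,j) * v j) / a else 0))" for v
    proof -
      define c where "c = (\<Sum>j<d. Q$$(m,j) * v j)"
      define s where "s = c / a"
      define d1 where "d1 = (\<Sum>i<d. cnj (v i) * Q$$(i,m))"
      have "qf d Q (\<lambda>i. v i - (if i = m then s else 0)) =
        (\<Sum>i<d. \<Sum>j<d. cnj (v i) * Q$$(i,j) * v j - (cnj (v i) * Q$$(i,j)) * (if j = m then s else 0)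
           - (Q$$(i,j) * v j) * (if i = m then cnj s else 0)
           + (Q$$(i,j) * (if j = m then s else 0)) * (if i = m then cnj s else 0))"
        unfolding qf_def by (intro sum.cong refl) (auto simp: algebra_simps)
      also have "\<dots> = qf d Q v - (\<Sum>i<d. \<Sum>j<d. (cnj (v i) * Q$$(i,j)) * (if j = m then s else 0))
           - (\<Sum>i<d. (\<Sum>j<d. Q$$(i,j) * v j) * (if i = m then cnj s else 0))
           + (\<Sum>i<d. (\<Sum>j<d. Q$$(i,j) * (if j = m then s else 0)) * (if i = m then cnj s else 0))"
        unfolding qf_def by (simp add: sum.distrib sum_subtractf sum_distrib_right)
      also have "\<dots> = qf d Q v - s * d1 - c * cnj s + Q$$(m,m) * s * cnj s"
        by (simp only: sum_one[OF m], simp add: d1_def c_def sum_distrib_left mult_ac)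
      also have "\<dots> = qf d Q v - s * d1"
      proof -
        have "Q$$(m,m) * s * cnj s = c * cnj s" unfolding s_def a_def[symmetric] using False ar
          by (simp add: field_simps)
        then show ?thesis by simp
      qed
      also have "\<dots> = qf d Q' v"
      proof -
        have "qf d Q' v = (\<Sum>i<d. \<Sum>j<d. cnj (v i) * Q$$(i,j) * v j - (cnj (v i) * Q$$(i,m)) * (Q$$(m,j) * v j) / a)"
          unfolding qf_def Q'_def by (intro sum.cong refl) (simp add: algebra_simps diff_divide_distrib)
        also have "\<dots> = qf d Q v - d1 * c / a"
          unfolding qf_def d1_def c_def
          by (simp add: sum_subtractf sum_divide_distrib[symmetric] sum_distrib_left[symmetric] sum_distrib_right[symmetric])
        finally show ?thesis unfolding s_def by simp
      qed
      finally show ?thesis unfolding s_def c_def by simp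
    qed
    have psd': "psd d Q'" unfolding psd_iff
    proof
      show "Q' \<in> carrier_mat d d" unfolding Q'_def by simp
      show "\<forall>v. Im (qf d Q' v) = 0 \<and> 0 \<le> Re (qf d Q' v)" unfolding qfeq using QQ unfolding psd_iff by blast
    qed
    have zer': "\<forall>i<d. \<forall>j<d. (i < Suc m \<or> j < Suc m) \<longrightarrow> Q'$$(i,j) = 0"
    proof (intro allI impI)
      fix i j assume ij: "i < d" "j < d" "i < Suc m \<or> j < Suc m"
      show "Q'$$(i,j) = 0"
      proof (cases "i < m \<or> j < m")
        case True
        have "Q$$(i,j) = 0" using True ij zer by blast
        moreover have "Q$$(i,m) = 0 \<or> Q$$(m,j) = 0" using True ij zer m by blast
        ultimately show ?thesis using ij unfolding Q'_def by auto
      next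
        case F: False
        then have "i = m \<or> j = m" using ij by auto
        then show ?thesis using ij False unfolding Q'_def a_def by auto
      qed
    qed
    have IH: "Im (ptr d N Q') = 0 \<and> Re (ptr d N Q') \<ge> 0" using Suc.IH[OF k NN psd' zer'] .
    have split: "ptr d N Q = ptr d N Q' + qf d N (\<lambda>j. Q$$(j,m)) / a"
    proof -
      have "qf d N (\<lambda>j. Q$$(j,m)) = (\<Sum>i<d. \<Sum>j<d. N$$(i,j) * (Q$$(j,m) * Q$$(m,i)))"
        unfolding qf_def using psd_herm[OF QQ m] by (intro sum.cong refl) (simp add: mult_ac)
      then have "qf d N (\<lambda>j. Q$$(j,m)) / a = (\<Sum>i<d. \<Sum>j<d. N$$(i,j) * (Q$$(j,m) * Q$$(m,i) / a))"
        by (simp add: sum_divide_distrib)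
      then show ?thesis unfolding ptr_def Q'_def
        by (simp add: sum.distrib[symmetric] algebra_simps)
    qed
    have qN: "Im (qf d N (\<lambda>j. Q$$(j,m))) = 0 \<and> Re (qf d N (\<lambda>j. Q$$(j,m))) \<ge> 0"
      using NN unfolding psd_iff by blast
    have "Im (qf d N (\<lambda>j. Q$$(j,m)) / a) = 0 \<and> Re (qf d N (\<lambda>j. Q$$(j,m)) / a) \<ge> 0"
      using qN aR' unfolding ar by (simp add: Re_divide_of_real Im_divide_of_real)
    then show ?thesis unfolding split using IH by simp
  qed
qed


lemma key: assumes "psd d N" "psd d Q" shows "Im (mtrace (N*Q)) = 0 \<and> Re (mtrace (N*Q)) \<ge> 0"
proof -
  have "mtrace (N*Q) = ptr d N Q" using assms unfolding psd_iff ptr_def by (simp add: mtrace_mult)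
  then show ?thesis using key_ind[of d 0 d N Q] assms by simp
qed

fun msum :: "nat \<Rightarrow> (nat \<Rightarrow> complex mat) \<Rightarrow> nat \<Rightarrow> complex mat" where
  "msum d f 0 = 0\<^sub>m d d"
| "msum d f (Suc n) = msum d f n + f n"

lemma msum_carrier: "(\<And>k. k < n \<Longrightarrow> f k \<in> carrier_mat d d) \<Longrightarrow> msum d f n \<in> carrier_mat d d"
  by (induction n) auto

lemma msum_index: "(\<And>k. k < n \<Longrightarrow> f k \<in> carrier_mat d d) \<Longrightarrow> i < d \<Longrightarrow> j < d \<Longrightarrow>
  msum d f n $$ (i,j) = (\<Sum>k<n. f k $$ (i,j))"
proof (induction n)
  case 0 then show ?case by simp
next
  case (Suc n)
  have "msum d f n \<in> carrier_mat d d" using Suc.prems by (intro msum_carrier) auto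
  moreover have "dim_row (f n) = d" "dim_col (f n) = d" using Suc.prems by auto
  ultimately show ?case using Suc by simp
qed

lemma lin_zero: assumes "linear_map_on d L" shows "L (0\<^sub>m d d) = 0\<^sub>m d d"
proof -
  have c: "L (0\<^sub>m d d) \<in> carrier_mat d d" using assms unfolding linear_map_on_def by auto
  have "0\<^sub>m d d = (0::complex) \<cdot>\<^sub>m 0\<^sub>m d d" by (intro eq_matI) auto
  then have "L (0\<^sub>m d d) = 0 \<cdot>\<^sub>m L (0\<^sub>m d d)" using assms unfolding linear_map_on_def
    by (metis zero_carrier_mat)
  also have "\<dots> = 0\<^sub>m d d" using c by (intro eq_matI) auto
  finally show ?thesis .
qed

lemma msum_L: assumes "linear_map_on d L" shows "(\<And>k. k < n \<Longrightarrow> f k \<in> carrier_mat d d) \<Longrightarrow>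
  L (msum d f n) = msum d (\<lambda>k. L (f k)) n"
proof (induction n)
  case 0 then show ?case using lin_zero[OF assms] by simp
next
  case (Suc n)
  have "msum d f n \<in> carrier_mat d d" using Suc.prems by (intro msum_carrier) auto
  moreover have "f n \<in> carrier_mat d d" using Suc.prems by auto
  ultimately show ?case using Suc assms unfolding linear_map_on_def by simp
qed

lemma mtrace_add: "X \<in> carrier_mat d d \<Longrightarrow> Y \<in> carrier_mat d d \<Longrightarrow> mtrace (X + Y) = mtrace X + mtrace Y"
  by (simp add: mtrace_def sum.distrib)

lemma msum_tr: assumes "N \<in> carrier_mat d d" shows "(\<And>k. k < n \<Longrightarrow> f k \<in> carrier_mat d d) \<Longrightarrow>
  mtrace (N * msum d f n) = (\<Sum>k<n. mtrace (N * f k))"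
proof (induction n)
  case 0 then show ?case using assms by (simp add: mtrace_def)
next
  case (Suc n)
  have c1: "msum d f n \<in> carrier_mat d d" using Suc.prems by (intro msum_carrier) auto
  have c2: "f n \<in> carrier_mat d d" using Suc.prems by auto
  have "mtrace (N * msum d f (Suc n)) = mtrace (N * msum d f n) + mtrace (N * f n)"
    using c1 c2 assms by (simp add: mult_add_distrib_mat mtrace_add[OF mult_carrier_mat[OF assms c1] mult_carrier_mat[OF assms c2]])
  then show ?case using Suc by simp
qed

lemma munit_carrier[simp]: "munit d i j \<in> carrier_mat d d"
  by (simp add: munit_def)

lemma munit_dim[simp]: "dim_row (munit d i j) = d" "dim_col (munit d i j) = d"
  by (simp_all add: munit_def)

lemma munit_index[simp]: "a < d \<Longrightarrow> b < d \<Longrightarrow> munit d i j $$ (a,b) = (if a = i \<and> b = j then 1 else 0)"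
  by (simp add: munit_def)

lemma tr_smult: "N \<in> carrier_mat d d \<Longrightarrow> B \<in> carrier_mat d d \<Longrightarrow> mtrace (N * (c \<cdot>\<^sub>m B)) = c * mtrace (N * B)"
  by (simp add: mtrace_mult sum_distrib_left mult_ac)

definition dual :: "nat \<Rightarrow> (complex mat \<Rightarrow> complex mat) \<Rightarrow> complex mat \<Rightarrow> complex mat" where
  "dual d L N = mat d d (\<lambda>(j,i). mtrace (N * L (munit d i j)))"

lemma dual_psd: assumes lin: "linear_map_on d L" and pos: "positive_map d L" and N: "psd d N"
  shows "psd d (dual d L N)"
  unfolding psd_iff
proof (intro conjI allI)
  show "dual d L N \<in> carrier_mat d d" unfolding dual_def by simp
  fix v
  have Nc: "N \<in> carrier_mat d d" using N unfolding psd_iff by auto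
  define P where "P = mat d d (\<lambda>(a,b). v a * cnj (v b))"
  define f where "f = (\<lambda>i. msum d (\<lambda>j. (cnj (v i) * v j) \<cdot>\<^sub>m munit d j i) d)"
  have fc: "f i \<in> carrier_mat d d" for i unfolding f_def by (intro msum_carrier) auto
  have Peq: "P = msum d f d"
  proof (rule eq_matI)
    show "dim_row P = dim_row (msum d f d)" "dim_col P = dim_col (msum d f d)"
      using msum_carrier[of d f d, OF fc] unfolding P_def by auto
    fix a b assume ab: "a < dim_row (msum d f d)" "b < dim_col (msum d f d)"
    then have ab: "a < d" "b < d" using msum_carrier[of d f d, OF fc] by auto
    have "msum d f d $$ (a,b) = (\<Sum>i<d. f i $$ (a,b))" using msum_index[OF fc ab] .
    also have "\<dots> = (\<Sum>i<d. \<Sum>j<d. (cnj (v i) * v j) * (if a = j \<and> b = i then 1 else 0))"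
      unfolding f_def using ab by (intro sum.cong refl) (simp add: msum_index)
    also have "\<dots> = (\<Sum>i<d. if b = i then cnj (v i) * v a else 0)"
      using ab by (intro sum.cong refl) (auto simp: if_distrib sum.delta' cong: if_cong)
    also have "\<dots> = P $$ (a,b)" using ab unfolding P_def by (simp add: sum.delta')
    finally show "P $$ (a,b) = msum d f d $$ (a,b)" by simp
  qed
  have Ppsd: "psd d P" unfolding psd_iff
  proof (intro conjI allI)
    show "P \<in> carrier_mat d d" unfolding P_def by simp
    fix u
    define z where "z = (\<Sum>a<d. cnj (u a) * v a)"
    have "qf d P u = z * cnj z" unfolding qf_def P_def z_def
      by (simp add: sum_product sum_distrib_left mult_ac)
    then show "Im (qf d P u) = 0" "0 \<le> Re (qf d P u)"
      by (simp_all add: complex_mult_cnj)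
  qed
  have LP: "psd d (L P)" using pos Ppsd unfolding positive_map_def by blast
  have "mtrace (N * L P) = (\<Sum>i<d. mtrace (N * L (f i)))"
    unfolding Peq using msum_L[OF lin, of d f, OF fc] msum_tr[of N d d] Nc lin fc
    unfolding linear_map_on_def by simp
  also have "\<dots> = (\<Sum>i<d. \<Sum>j<d. (cnj (v i) * v j) * mtrace (N * L (munit d j i)))"
  proof (intro sum.cong refl)
    fix i
    have "L (f i) = msum d (\<lambda>j. L ((cnj (v i) * v j) \<cdot>\<^sub>m munit d j i)) d"
      unfolding f_def by (rule msum_L[OF lin]) simp
    also have "\<dots> = msum d (\<lambda>j. (cnj (v i) * v j) \<cdot>\<^sub>m L (munit d j i)) d"
      using lin unfolding linear_map_on_def by simp
    finally show "mtrace (N * L (f i)) = (\<Sum>j<d. (cnj (v i) * v j) * mtrace (N * L (munit d j i)))"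
      using msum_tr[OF Nc] lin tr_smult[OF Nc] unfolding linear_map_on_def by simp
  qed
  also have "\<dots> = qf d (dual d L N) v"
    unfolding qf_def dual_def by (intro sum.cong refl) (simp add: mult_ac)
  finally have "mtrace (N * L P) = qf d (dual d L N) v" .
  then show "Im (qf d (dual d L N) v) = 0" "0 \<le> Re (qf d (dual d L N) v)"
    using key[OF N LP] by auto
qed


lemma dual_povm: assumes lin: "linear_map_on d L" and pos: "positive_map d L" and tp: "trace_preserving d L"
  and N: "povm d N" shows "povm d (\<lambda>b. dual d L (N b))"
  unfolding povm_def
proof (intro conjI allI impI)
  fix b show "psd d (dual d L (N b))" using dual_psd[OF lin pos] N unfolding povm_def by blast
next
  fix i j assume ij: "i < d" "j < d"
  define X where "X = L (munit d j i)"
  have Xc: "X \<in> carrier_mat d d" using lin unfolding linear_map_on_def X_def by simp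
  have Nc: "N b \<in> carrier_mat d d" for b using N unfolding povm_def psd_iff by blast
  have "(\<Sum>b\<in>UNIV. dual d L (N b) $$ (i,j)) = (\<Sum>b\<in>UNIV. \<Sum>r<d. \<Sum>s<d. N b $$ (r,s) * X $$ (s,r))"
  proof (rule sum.cong[OF refl])
    fix b
    have "dual d L (N b) $$ (i,j) = mtrace (N b * X)" unfolding dual_def X_def using ij by simp
    then show "dual d L (N b) $$ (i,j) = (\<Sum>r<d. \<Sum>s<d. N b $$ (r,s) * X $$ (s,r))"
      using mtrace_mult[OF Nc Xc] by simp
  qed
  also have "\<dots> = (\<Sum>r<d. \<Sum>s<d. (\<Sum>b\<in>UNIV. N b $$ (r,s)) * X $$ (s,r))"
  proof -
    have "(\<Sum>b\<in>UNIV. \<Sum>r<d. \<Sum>s<d. N b $$ (r,s) * X $$ (s,r)) = (\<Sum>r<d. \<Sum>b\<in>UNIV. \<Sum>s<d. N b $$ (r,s) * X $$ (s,r))"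
      by (rule sum.swap)
    also have "\<dots> = (\<Sum>r<d. \<Sum>s<d. \<Sum>b\<in>UNIV. N b $$ (r,s) * X $$ (s,r))"
      by (rule sum.cong[OF refl], rule sum.swap)
    finally show ?thesis by (simp add: sum_distrib_right)
  qed
  also have "\<dots> = (\<Sum>r<d. \<Sum>s<d. (if r = s then X $$ (s,r) else 0))"
    using N unfolding povm_def by (intro sum.cong refl) auto
  also have "\<dots> = mtrace X" unfolding mtrace_def using Xc by (simp add: sum.delta)
  also have "\<dots> = mtrace (munit d j i)" using tp unfolding trace_preserving_def X_def by simp
  also have "\<dots> = (if i = j then 1 else 0)" unfolding mtrace_def using ij
    by (cases "i = j") (auto simp: sum.delta intro!: sum.neutral)
  finally show "(\<Sum>b\<in>UNIV. dual d L (N b) $$ (i,j)) = (if i = j then 1 else 0)" .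
qed

lemma kron3_index: assumes "A \<in> carrier_mat a a" "B \<in> carrier_mat b b" "C \<in> carrier_mat c c"
  "i1 < a" "i2 < b" "i3 < c" "j1 < a" "j2 < b" "j3 < c"
  shows "kron (kron A B) C $$ (i1*(b*c)+i2*c+i3, j1*(b*c)+j2*c+j3) = A$$(i1,j1) * B$$(i2,j2) * C$$(i3,j3)"
proof -
  have e: "i1*(b*c)+i2*c+i3 = (i1*b+i2)*c+i3" "j1*(b*c)+j2*c+j3 = (j1*b+j2)*c+j3"
    by (simp_all add: algebra_simps)
  show ?thesis unfolding e using assms
    by (simp add: kron_index2[of "kron A B" "a*b" C c] kron_carrier idx_less kron_index2)
qed

lemma trace_kron3: assumes "A \<in> carrier_mat a a" "E \<in> carrier_mat a a" "B \<in> carrier_mat b b" "F \<in> carrier_mat b b"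
  "C \<in> carrier_mat c c" "G \<in> carrier_mat c c"
  shows "mtrace (kron (kron A B) C * kron (kron E F) G) = mtrace (A*E) * mtrace (B*F) * mtrace (C*G)"
  using assms by (simp add: trace_kron[of _ "a*b" _ _ c] kron_carrier trace_kron)

lemma tr_munit: assumes "A \<in> carrier_mat d d" "i < d" "j < d" shows "mtrace (A * munit d i j) = A $$ (j,i)"
proof -
  have "mtrace (A * munit d i j) = (\<Sum>r<d. \<Sum>s<d. A$$(r,s) * (if s = i \<and> r = j then 1 else 0))"
    using assms by (simp add: mtrace_mult)
  also have "\<dots> = (\<Sum>r<d. \<Sum>s<d. if s = i then (if r = j then A$$(r,s) else 0) else 0)"
    by (intro sum.cong refl) auto
  also have "\<dots> = A $$ (j,i)" using assms by (simp add: sum.delta)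
  finally show ?thesis .
qed

lemma T_sum: "finite S \<Longrightarrow> (\<Sum>r<n. \<Sum>s<n. p r s * (\<Sum>x\<in>S. G x s r)) = (\<Sum>x\<in>S. \<Sum>r<n. \<Sum>s<n. p r s * (G x s r :: complex))"
proof -
  assume S: "finite S"
  have "(\<Sum>r<n. \<Sum>s<n. p r s * (\<Sum>x\<in>S. G x s r)) = (\<Sum>r<n. \<Sum>s<n. \<Sum>x\<in>S. p r s * G x s r)"
    by (simp add: sum_distrib_left)
  also have "\<dots> = (\<Sum>r<n. \<Sum>x\<in>S. \<Sum>s<n. p r s * G x s r)"
    by (rule sum.cong[OF refl], rule sum.swap)
  also have "\<dots> = (\<Sum>x\<in>S. \<Sum>r<n. \<Sum>s<n. p r s * G x s r)"
    by (rule sum.swap)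
  finally show ?thesis .
qed

lemma sum6_perm: fixes g :: "nat \<Rightarrow> nat \<Rightarrow> nat \<Rightarrow> nat \<Rightarrow> nat \<Rightarrow> nat \<Rightarrow> complex"
  shows "(\<Sum>a<nA. \<Sum>b<nB. \<Sum>c<nC. \<Sum>d<nA. \<Sum>e<nB. \<Sum>f<nC. g a b c d e f) =
         (\<Sum>d<nA. \<Sum>a<nA. \<Sum>e<nB. \<Sum>b<nB. \<Sum>f<nC. \<Sum>c<nC. g a b c d e f)"
proof -
  have "(\<Sum>a<nA. \<Sum>b<nB. \<Sum>c<nC. \<Sum>d<nA. \<Sum>e<nB. \<Sum>f<nC. g a b c d e f) =
        (\<Sum>a<nA. \<Sum>b<nB. \<Sum>d<nA. \<Sum>c<nC. \<Sum>e<nB. \<Sum>f<nC. g a b c d e f)"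
    by (rule sum.cong[OF refl], rule sum.cong[OF refl], rule sum.swap)
  also have "\<dots> = (\<Sum>a<nA. \<Sum>d<nA. \<Sum>b<nB. \<Sum>c<nC. \<Sum>e<nB. \<Sum>f<nC. g a b c d e f)"
    by (rule sum.cong[OF refl], rule sum.swap)
  also have "\<dots> = (\<Sum>d<nA. \<Sum>a<nA. \<Sum>b<nB. \<Sum>c<nC. \<Sum>e<nB. \<Sum>f<nC. g a b c d e f)"
    by (rule sum.swap)
  also have "\<dots> = (\<Sum>d<nA. \<Sum>a<nA. \<Sum>b<nB. \<Sum>e<nB. \<Sum>c<nC. \<Sum>f<nC. g a b c d e f)"
    by (rule sum.cong[OF refl], rule sum.cong[OF refl], rule sum.cong[OF refl], rule sum.swap)
  also have "\<dots> = (\<Sum>d<nA. \<Sum>a<nA. \<Sum>e<nB. \<Sum>b<nB. \<Sum>c<nC. \<Sum>f<nC. g a b c d e f)"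
    by (rule sum.cong[OF refl], rule sum.cong[OF refl], rule sum.swap)
  also have "\<dots> = (\<Sum>d<nA. \<Sum>a<nA. \<Sum>e<nB. \<Sum>b<nB. \<Sum>f<nC. \<Sum>c<nC. g a b c d e f)"
    by (rule sum.cong[OF refl], rule sum.cong[OF refl], rule sum.cong[OF refl], rule sum.cong[OF refl], rule sum.swap)
  finally show ?thesis .
qed


lemma main_id:
  assumes A: "A \<in> carrier_mat dA dA" and B1: "B1 \<in> carrier_mat d1 d1" and B2: "B2 \<in> carrier_mat d2 d2"
    and rho: "\<rho> \<in> carrier_mat (dA*d1*d2) (dA*d1*d2)"
    and l1: "linear_map_on d1 L1" and l2: "linear_map_on d2 L2"
  shows "mtrace (kron (kron A B1) B2 * apply_id_maps dA d1 d2 L1 L2 \<rho>) =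
         mtrace (kron (kron A (dual d1 L1 B1)) (dual d2 L2 B2) * \<rho>)"
proof -
  define n where "n = dA*d1*d2"
  define P where "P = kron (kron A B1) B2"
  define D1 where "D1 = dual d1 L1 B1"
  define D2 where "D2 = dual d2 L2 B2"
  have D1c: "D1 \<in> carrier_mat d1 d1" unfolding D1_def dual_def by simp
  have D2c: "D2 \<in> carrier_mat d2 d2" unfolding D2_def dual_def by simp
  have Pc: "P \<in> carrier_mat n n" unfolding P_def n_def using A B1 B2 by (intro kron_carrier) auto
  define K where "K = (\<lambda>iA jA i1 j1 i2 j2. kron (kron (munit dA iA jA) (L1 (munit d1 i1 j1))) (L2 (munit d2 i2 j2)))"
  define I where "I = (\<lambda>iA i1 i2. iA*(d1*d2)+i1*d2+i2)"
  have L1c: "L1 (munit d1 i j) \<in> carrier_mat d1 d1" for i j using l1 unfolding linear_map_on_def by simp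
  have L2c: "L2 (munit d2 i j) \<in> carrier_mat d2 d2" for i j using l2 unfolding linear_map_on_def by simp
  have Kc: "K iA jA i1 j1 i2 j2 \<in> carrier_mat n n" for iA jA i1 j1 i2 j2
    unfolding K_def n_def using L1c L2c by (intro kron_carrier) auto
  have R: "apply_id_maps dA d1 d2 L1 L2 \<rho> = mat n n (\<lambda>(r,s).
       \<Sum>iA<dA. \<Sum>jA<dA. \<Sum>i1<d1. \<Sum>j1<d1. \<Sum>i2<d2. \<Sum>j2<d2.
         \<rho> $$ (I iA i1 i2, I jA j1 j2) * K iA jA i1 j1 i2 j2 $$ (r, s))"
    unfolding apply_id_maps_def n_def I_def K_def by simp
  have inner: "(\<Sum>r<n. \<Sum>s<n. P$$(r,s) * (c * K iA jA i1 j1 i2 j2 $$ (s,r))) =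
      c * (A$$(jA,iA) * D1$$(j1,i1) * D2$$(j2,i2))"
    if b: "iA < dA" "jA < dA" "i1 < d1" "j1 < d1" "i2 < d2" "j2 < d2" for c iA jA i1 j1 i2 j2
  proof -
    have "(\<Sum>r<n. \<Sum>s<n. P$$(r,s) * (c * K iA jA i1 j1 i2 j2 $$ (s,r))) = c * mtrace (P * K iA jA i1 j1 i2 j2)"
      unfolding mtrace_mult[OF Pc Kc] by (simp add: sum_distrib_left mult_ac)
    also have "mtrace (P * K iA jA i1 j1 i2 j2) = mtrace (A * munit dA iA jA) * mtrace (B1 * L1 (munit d1 i1 j1)) * mtrace (B2 * L2 (munit d2 i2 j2))"
      unfolding P_def K_def by (rule trace_kron3[OF A _ B1 L1c B2 L2c]) simp
    also have "\<dots> = A$$(jA,iA) * D1$$(j1,i1) * D2$$(j2,i2)"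
      using b A unfolding D1_def D2_def dual_def by (simp add: tr_munit)
    finally show ?thesis .
  qed
  have "mtrace (P * apply_id_maps dA d1 d2 L1 L2 \<rho>) = (\<Sum>r<n. \<Sum>s<n. P$$(r,s) * (
       \<Sum>iA<dA. \<Sum>jA<dA. \<Sum>i1<d1. \<Sum>j1<d1. \<Sum>i2<d2. \<Sum>j2<d2.
         \<rho> $$ (I iA i1 i2, I jA j1 j2) * K iA jA i1 j1 i2 j2 $$ (s, r)))"
    unfolding R using Pc by (simp add: mtrace_mult)
  also have "\<dots> = (\<Sum>iA<dA. \<Sum>jA<dA. \<Sum>i1<d1. \<Sum>j1<d1. \<Sum>i2<d2. \<Sum>j2<d2. \<Sum>r<n. \<Sum>s<n.
        P$$(r,s) * (\<rho> $$ (I iA i1 i2, I jA j1 j2) * K iA jA i1 j1 i2 j2 $$ (s, r)))"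
    by (simp only: T_sum finite_lessThan)
  also have "\<dots> = (\<Sum>iA<dA. \<Sum>jA<dA. \<Sum>i1<d1. \<Sum>j1<d1. \<Sum>i2<d2. \<Sum>j2<d2.
        \<rho> $$ (I iA i1 i2, I jA j1 j2) * (A$$(jA,iA) * D1$$(j1,i1) * D2$$(j2,i2)))"
    by (intro sum.cong refl) (simp add: inner)
  also have "\<dots> = (\<Sum>jA<dA. \<Sum>j1<d1. \<Sum>j2<d2. \<Sum>iA<dA. \<Sum>i1<d1. \<Sum>i2<d2.
        A$$(jA,iA) * D1$$(j1,i1) * D2$$(j2,i2) * \<rho> $$ (I iA i1 i2, I jA j1 j2))"
    by (subst sum6_perm) (simp add: mult_ac)
  also have "\<dots> = (\<Sum>r<dA*d1*d2. \<Sum>s<dA*d1*d2. kron (kron A D1) D2 $$ (r,s) * \<rho> $$ (s,r))"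
    unfolding sum_split3 I_def by (simp add: kron3_index[OF A D1c D2c])
  also have "\<dots> = mtrace (kron (kron A D1) D2 * \<rho>)"
    using mtrace_mult[OF _ rho, of "kron (kron A D1) D2"] A D1c D2c kron_carrier
    by (metis kron_carrier)
  finally show ?thesis unfolding P_def D1_def D2_def .
qed


theorem proposition1:
  fixes dA d1 d2 :: nat
    and \<rho> :: "complex mat"
    and L1 L2 :: "complex mat \<Rightarrow> complex mat"
    and M :: "'x::finite \<Rightarrow> 'a::finite \<Rightarrow> complex mat"
    and N1 :: "'y1::finite \<Rightarrow> 'b1::finite \<Rightarrow> complex mat"
    and N2 :: "'y2::finite \<Rightarrow> 'b2::finite \<Rightarrow> complex mat"
  assumes "density_op (dA * d1 * d2) \<rho>"
    and "linear_map_on d1 L1" and "positive_map d1 L1" and "trace_preserving d1 L1"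
    and "linear_map_on d2 L2" and "positive_map d2 L2" and "trace_preserving d2 L2"
    and "\<forall>x. povm dA (M x)"
    and "\<forall>y1. povm d1 (N1 y1)"
    and "\<forall>y2. povm d2 (N2 y2)"
  shows "quantum_realisable (\<lambda>a b1 b2 x y1 y2.
           mtrace (kron (kron (M x a) (N1 y1 b1)) (N2 y2 b2) * apply_id_maps dA d1 d2 L1 L2 \<rho>))"
proof -
  have rho: "\<rho> \<in> carrier_mat (dA*d1*d2) (dA*d1*d2)" using assms(1) unfolding density_op_def psd_iff by blast
  have F: "\<forall>y1. povm d1 (\<lambda>b. dual d1 L1 (N1 y1 b))" using dual_povm assms(2,3,4,9) by blast
  have G: "\<forall>y2. povm d2 (\<lambda>b. dual d2 L2 (N2 y2 b))" using dual_povm assms(5,6,7,10) by blast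
  have eq: "\<forall>a b1 b2 x y1 y2. mtrace (kron (kron (M x a) (N1 y1 b1)) (N2 y2 b2) * apply_id_maps dA d1 d2 L1 L2 \<rho>) =
     mtrace (kron (kron (M x a) (dual d1 L1 (N1 y1 b1))) (dual d2 L2 (N2 y2 b2)) * \<rho>)"
  proof (intro allI)
    fix a b1 b2 x y1 y2
    have "M x a \<in> carrier_mat dA dA" using assms(8) unfolding povm_def psd_iff by blast
    moreover have "N1 y1 b1 \<in> carrier_mat d1 d1" using assms(9) unfolding povm_def psd_iff by blast
    moreover have "N2 y2 b2 \<in> carrier_mat d2 d2" using assms(10) unfolding povm_def psd_iff by blast
    ultimately show "mtrace (kron (kron (M x a) (N1 y1 b1)) (N2 y2 b2) * apply_id_maps dA d1 d2 L1 L2 \<rho>) =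
     mtrace (kron (kron (M x a) (dual d1 L1 (N1 y1 b1))) (dual d2 L2 (N2 y2 b2)) * \<rho>)"
      using main_id rho assms(2,5) by blast
  qed
  show ?thesis unfolding quantum_realisable_def
    apply (rule exI[where x=dA], rule exI[where x=d1], rule exI[where x=d2], rule exI[where x=\<rho>], rule exI[where x=M])
    apply (rule exI[where x="\<lambda>y b. dual d1 L1 (N1 y b)"], rule exI[where x="\<lambda>y b. dual d2 L2 (N2 y b)"])
    using assms(1,8) F G eq by simp
qed

end
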